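(* Let $I,J\subset\mathbb{R}$ be open intervals and $f\colon I\to\mathbb{R}$, $g\colon J\to\mathbb{R}$ smooth functions, let $\alpha(s)=(s,0,f(s))$ (a curve in the plane $\{y=0\}$) and $\beta(t)=(0,t,g(t))$ (a curve in the plane $\{x=0\}$), and consider the translation surface $$x(s,t)=\alpha(s)\ast\beta(t)=(s,\,t\,e^{f(s)},\,f(s)+g(t)),\qquad (s,t)\in I\times J,$$ in $\mathrm{Sol}_3$. This surface is minimal in each of the following cases: (1) $f\equiv a$ is constant and $g(t)=\log|t+\lambda|+\mu$ for constants $\lambda,\mu$ (with $-\lambda\notin J$); (2) $f(s)=-\log|s+\lambda|+\mu$ for constants $\lambda,\mu$ (with $-\lambda\notin I$) and $g\equiv a$ is constant; (3) $g(t)=\log|t|+\mu$ for a constant $\mu$ (with $0\notin J$) and $f$ is an arbitrary smooth function; (4) $f$ and $g$ are both constant (the surface is a piece of a plane $z=z_0$). Moreover, the planes $x=x_0$ are minimal translation surfaces of type III (obtained with $\alpha(s)=(x_0,0,s)$ and $\beta(t)=(0,t,g(t))$, $g$ arbitrary).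
   Context: $\mathrm{Sol}_3$ is $\mathbb{R}^3$ with coordinates $(x,y,z)$, the Riemannian metric $e^{2z}dx^2+e^{-2z}dy^2+dz^2$, and the Lie group operation $(x,y,z)\ast(x',y',z')=(x+e^{-z}x',\,y+e^{z}y',\,z+z')$, for which the metric is left-invariant. A translation surface $M(\alpha,\beta)$ is a surface parametrized by $x(s,t)=\alpha(s)\ast\beta(t)$ where $\alpha,\beta$ are curves lying in coordinate planes of $\mathbb{R}^3$; it is of type III if $\alpha\subset\{y=0\}$ and $\beta\subset\{x=0\}$. A surface is minimal if its mean curvature (half the trace of the Weingarten map, computed with the Levi-Civita connection of the metric above) vanishes identically. *)

theory Defs
  imports "HOL-Analysis.Analysis"
begin

definition sol_metric :: "real^3 \<Rightarrow> real^3^3" where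
  "sol_metric p = (\<chi> i j. if i = j then
       (if i = 1 then exp (2 * p$3) else if i = 2 then exp (- 2 * p$3) else 1) else 0)"

definition sol_mult :: "real^3 \<Rightarrow> real^3 \<Rightarrow> real^3" where
  "sol_mult p q = vector [p$1 + exp (- p$3) * q$1, p$2 + exp (p$3) * q$2, p$3 + q$3]"

definition metric_partial :: "(real^3 \<Rightarrow> real^3^3) \<Rightarrow> real^3 \<Rightarrow> 3 \<Rightarrow> real^3^3" where
  "metric_partial G p l = (\<chi> i j. deriv (\<lambda>h. G (p + h *\<^sub>R axis l 1) $ i $ j) 0)"

definition christoffel :: "(real^3 \<Rightarrow> real^3^3) \<Rightarrow> real^3 \<Rightarrow> 3 \<Rightarrow> 3 \<Rightarrow> 3 \<Rightarrow> real" where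
  "christoffel G p k i j = (1/2) * (\<Sum>l\<in>UNIV. matrix_inv (G p) $ k $ l *
      (metric_partial G p i $ j $ l + metric_partial G p j $ i $ l - metric_partial G p l $ i $ j))"

definition ginner :: "(real^3 \<Rightarrow> real^3^3) \<Rightarrow> real^3 \<Rightarrow> real^3 \<Rightarrow> real^3 \<Rightarrow> real" where
  "ginner G p u v = u \<bullet> (G p *v v)"

text \<open>Covariant derivative at p of a vector field W in direction u, where a is the
  ordinary (coordinate) derivative of W in direction u.\<close>
definition covd :: "(real^3 \<Rightarrow> real^3^3) \<Rightarrow> real^3 \<Rightarrow> real^3 \<Rightarrow> real^3 \<Rightarrow> real^3 \<Rightarrow> real^3" where
  "covd G p u w a = (\<chi> k. a $ k + (\<Sum>i\<in>UNIV. \<Sum>j\<in>UNIV. christoffel G p k i j * u $ i * w $ j))"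

definition Xs :: "(real \<Rightarrow> real \<Rightarrow> real^3) \<Rightarrow> real \<Rightarrow> real \<Rightarrow> real^3" where
  "Xs X s t = vector_derivative (\<lambda>s'. X s' t) (at s)"
definition Xt :: "(real \<Rightarrow> real \<Rightarrow> real^3) \<Rightarrow> real \<Rightarrow> real \<Rightarrow> real^3" where
  "Xt X s t = vector_derivative (\<lambda>t'. X s t') (at t)"
definition Xss :: "(real \<Rightarrow> real \<Rightarrow> real^3) \<Rightarrow> real \<Rightarrow> real \<Rightarrow> real^3" where
  "Xss X s t = vector_derivative (\<lambda>s'. Xs X s' t) (at s)"
definition Xst :: "(real \<Rightarrow> real \<Rightarrow> real^3) \<Rightarrow> real \<Rightarrow> real \<Rightarrow> real^3" where
  "Xst X s t = vector_derivative (\<lambda>t'. Xs X s t') (at t)"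
definition Xtt :: "(real \<Rightarrow> real \<Rightarrow> real^3) \<Rightarrow> real \<Rightarrow> real \<Rightarrow> real^3" where
  "Xtt X s t = vector_derivative (\<lambda>t'. Xt X s t') (at t)"

text \<open>Unit normal: G^{-1}(X_s x X_t) is G-orthogonal to X_s and X_t; normalise it.\<close>
definition unit_normal :: "(real^3 \<Rightarrow> real^3^3) \<Rightarrow> (real \<Rightarrow> real \<Rightarrow> real^3) \<Rightarrow> real \<Rightarrow> real \<Rightarrow> real^3" where
  "unit_normal G X s t =
     (let p = X s t; c = matrix_inv (G p) *v cross3 (Xs X s t) (Xt X s t)
      in (1 / sqrt (ginner G p c c)) *\<^sub>R c)"

text \<open>Mean curvature H = (E n - 2 F m + Gc l) / (2 (E Gc - F^2)), i.e. half the trace of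
  the Weingarten map, with second fundamental form l = <nabla_{X_s} X_s, N>, etc.\<close>
definition mean_curvature :: "(real^3 \<Rightarrow> real^3^3) \<Rightarrow> (real \<Rightarrow> real \<Rightarrow> real^3) \<Rightarrow> real \<Rightarrow> real \<Rightarrow> real" where
  "mean_curvature G X s t =
     (let p = X s t; a = Xs X s t; b = Xt X s t; N = unit_normal G X s t;
          E = ginner G p a a; F = ginner G p a b; Gc = ginner G p b b;
          l = ginner G p (covd G p a a (Xss X s t)) N;
          m = ginner G p (covd G p a b (Xst X s t)) N;
          n = ginner G p (covd G p b b (Xtt X s t)) N
      in (E * n - 2 * F * m + Gc * l) / (2 * (E * Gc - F\<^sup>2)))"

definition minimal_on :: "(real^3 \<Rightarrow> real^3^3) \<Rightarrow> (real \<Rightarrow> real \<Rightarrow> real^3) \<Rightarrow> real set \<Rightarrow> real set \<Rightarrow> bool" where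
  "minimal_on G X I J \<longleftrightarrow> (\<forall>s\<in>I. \<forall>t\<in>J. mean_curvature G X s t = 0)"

definition smooth_on :: "real set \<Rightarrow> (real \<Rightarrow> real) \<Rightarrow> bool" where
  "smooth_on I f \<longleftrightarrow> (\<forall>k. \<forall>x\<in>I. ((deriv ^^ k) f) differentiable (at x))"

definition open_interval :: "real set \<Rightarrow> bool" where
  "open_interval I \<longleftrightarrow> open I \<and> is_interval I \<and> I \<noteq> {}"

definition translation_surface :: "(real \<Rightarrow> real^3) \<Rightarrow> (real \<Rightarrow> real^3) \<Rightarrow> real \<Rightarrow> real \<Rightarrow> real^3" where
  "translation_surface \<alpha> \<beta> s t = sol_mult (\<alpha> s) (\<beta> t)"

end

theory Submission
  imports Defs
begin


definition solinv :: "real^3 \<Rightarrow> real^3^3" where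
  "solinv p = (\<chi> i j. if i = j then
       (if i = 1 then exp (- 2 * p$3) else if i = 2 then exp (2 * p$3) else 1) else 0)"

lemma exp_pair: "exp z * exp (- z) = 1" "exp (- z) * exp z = 1" for z :: real
  by (simp_all add: exp_add[symmetric])

lemma sol_inv_mult: "sol_metric p ** solinv p = mat 1" "solinv p ** sol_metric p = mat 1"
  by (auto simp: matrix_matrix_mult_def sol_metric_def solinv_def mat_def vec_eq_iff sum_3 exp_pair
      forall_3)

lemma matrix_inv_sol: "matrix_inv (sol_metric p) = solinv p"
proof -
  have ex: "sol_metric p ** solinv p = mat 1 \<and> solinv p ** sol_metric p = mat 1"
    using sol_inv_mult by blast
  have h: "sol_metric p ** matrix_inv (sol_metric p) = mat 1 \<and> matrix_inv (sol_metric p) ** sol_metric p = mat 1"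
    unfolding matrix_inv_def by (rule someI, rule ex)
  then have "matrix_inv (sol_metric p) = (solinv p ** sol_metric p) ** matrix_inv (sol_metric p)"
    using sol_inv_mult by (simp add: matrix_mul_lid)
  also have "\<dots> = solinv p ** (sol_metric p ** matrix_inv (sol_metric p))"
    by (simp only: matrix_mul_assoc)
  also have "\<dots> = solinv p" using h by (simp only: matrix_mul_rid)
  finally show ?thesis .
qed

lemma mp: "metric_partial sol_metric p l = (\<chi> i j. if i = j \<and> l = 3 then
       (if i = 1 then 2 * exp (2 * p$3) else if i = 2 then - 2 * exp (- 2 * p$3) else 0) else 0)"
proof -
  have d1: "deriv (\<lambda>h. exp (a + 2 * h)) 0 = 2 * exp a" for a :: real
  proof -
    have "((\<lambda>h. exp (a + 2 * h)) has_real_derivative exp (a + 2 * 0) * (0 + 2 * 1)) (at 0)"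
      by (auto intro!: derivative_eq_intros)
    then show ?thesis by (simp add: DERIV_imp_deriv)
  qed
  have d2: "deriv (\<lambda>h. exp (a - 2 * h)) 0 = - (2 * exp a)" for a :: real
  proof -
    have "((\<lambda>h. exp (a - 2 * h)) has_real_derivative exp (a - 2 * 0) * (0 - 2 * 1)) (at 0)"
      by (auto intro!: derivative_eq_intros)
    then show ?thesis by (simp add: DERIV_imp_deriv)
  qed
  have d3: "deriv (\<lambda>h. exp (- (h * 2) - a)) 0 = - (2 * exp (- a))" for a :: real
  proof -
    have "((\<lambda>h. exp (- (h * 2) - a)) has_real_derivative exp (- (0 * 2) - a) * (- (1 * 2) - 0)) (at 0)"
      by (auto intro!: derivative_eq_intros)
    then show ?thesis by (simp add: DERIV_imp_deriv)
  qed
  have c3: "(p + h *\<^sub>R axis l 1) $ 3 = p $ 3 + (if l = 3 then h else 0)" for h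
    by (simp add: axis_def)
  have dc: "deriv (\<lambda>h. c) 0 = 0" for c :: real
    by (rule DERIV_imp_deriv) simp
  have fe: "(\<lambda>h. sol_metric (p + h *\<^sub>R axis l 1) $ i $ j) = (\<lambda>h. if i = j then
       (if i = 1 then exp (2 * (p $ 3 + (if l = 3 then h else 0))) else if i = 2 then exp (- 2 * (p $ 3 + (if l = 3 then h else 0))) else 1) else 0)" for i j
    by (simp only: sol_metric_def c3 vec_lambda_beta)
  have e: "deriv (\<lambda>h. sol_metric (p + h *\<^sub>R axis l 1) $ i $ j) 0 = (if i = j \<and> l = 3 then
       (if i = 1 then 2 * exp (2 * p$3) else if i = 2 then - 2 * exp (- 2 * p$3) else 0) else 0)" for i j
  proof -
    have "i = 1 \<or> i = 2 \<or> i = 3" by (rule exhaust_3)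
    then show ?thesis unfolding fe using d1[of "2 * p$3"] d3[of "2 * p$3"]
      by (cases "l = 3"; cases "i = j"; auto simp: dc algebra_simps)
  qed
  show ?thesis unfolding metric_partial_def by (simp only: e vec_lambda_beta)
qed

lemma mpe: "metric_partial sol_metric p l $ i $ j = (if i = j \<and> l = 3 then
       (if i = 1 then 2 * exp (2 * p$3) else if i = 2 then - 2 * exp (- 2 * p$3) else 0) else 0)"
  by (simp add: mp)

lemma chr_gen: "christoffel sol_metric p k i j = 1/2 * (solinv p $ k $ k) *
   (metric_partial sol_metric p i $ j $ k + metric_partial sol_metric p j $ i $ k - metric_partial sol_metric p k $ i $ j)"
proof -
  have "(\<Sum>l\<in>UNIV. solinv p $ k $ l * (metric_partial sol_metric p i $ j $ l + metric_partial sol_metric p j $ i $ l - metric_partial sol_metric p l $ i $ j))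
     = (\<Sum>l\<in>UNIV. if l = k then solinv p $ k $ k * (metric_partial sol_metric p i $ j $ k + metric_partial sol_metric p j $ i $ k - metric_partial sol_metric p k $ i $ j) else 0)"
    by (rule sum.cong) (auto simp: solinv_def)
  also have "\<dots> = solinv p $ k $ k * (metric_partial sol_metric p i $ j $ k + metric_partial sol_metric p j $ i $ k - metric_partial sol_metric p k $ i $ j)"
    by simp
  finally show ?thesis unfolding christoffel_def matrix_inv_sol by simp
qed

lemma chr: "christoffel sol_metric p k i j =
   (if k = 1 then (if (i = 1 \<and> j = 3) \<or> (i = 3 \<and> j = 1) then 1 else 0)
    else if k = 2 then (if (i = 2 \<and> j = 3) \<or> (i = 3 \<and> j = 2) then -1 else 0)
    else (if i = 1 \<and> j = 1 then - exp (2 * p$3) else if i = 2 \<and> j = 2 then exp (- 2 * p$3) else 0))"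
proof -
  have k: "k = 1 \<or> k = 2 \<or> k = 3" by (rule exhaust_3)
  have i: "i = 1 \<or> i = 2 \<or> i = 3" by (rule exhaust_3)
  have j: "j = 1 \<or> j = 2 \<or> j = 3" by (rule exhaust_3)
  show ?thesis using k i j
    unfolding chr_gen mpe
    by (elim disjE; simp add: solinv_def exp_pair mult.assoc[symmetric])
qed

lemma covd_sol: "covd sol_metric p u w a = vector [a$1 + u$1 * w$3 + u$3 * w$1,
    a$2 - u$2 * w$3 - u$3 * w$2, a$3 - exp (2 * p$3) * u$1 * w$1 + exp (- 2 * p$3) * u$2 * w$2]"
  unfolding covd_def chr
  by (simp add: vec_eq_iff forall_3 sum_3 algebra_simps)

definition gi :: "real^3 \<Rightarrow> real^3 \<Rightarrow> real^3 \<Rightarrow> real" where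
  "gi p u v = exp (2 * p$3) * u$1 * v$1 + exp (- 2 * p$3) * u$2 * v$2 + u$3 * v$3"

lemma ginner_sol: "ginner sol_metric p u v = gi p u v"
  by (simp add: ginner_def gi_def sol_metric_def inner_vec_def sum_3 matrix_vector_mult_def algebra_simps)

lemma em: "exp (- 2 * z) = 1 / exp (2 * z)" for z :: real
  using exp_minus[of "2 * z"] by (simp add: divide_inverse)

lemma ginner_normal: "ginner sol_metric p w (r *\<^sub>R (solinv p *v x)) = r * (w \<bullet> x)"
  unfolding ginner_sol
  by (simp add: gi_def solinv_def inner_vec_def sum_3 matrix_vector_mult_def em field_simps exp_pair)

definition Ncond :: "real^3 \<Rightarrow> real^3 \<Rightarrow> real^3 \<Rightarrow> real^3 \<Rightarrow> real^3 \<Rightarrow> real^3 \<Rightarrow> real" where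
  "Ncond p a b ss st tt = gi p a a * (covd sol_metric p b b tt \<bullet> cross3 a b)
     - 2 * gi p a b * (covd sol_metric p a b st \<bullet> cross3 a b)
     + gi p b b * (covd sol_metric p a a ss \<bullet> cross3 a b)"

lemma mc_zero:
  assumes "Ncond (X s t) (Xs X s t) (Xt X s t) (Xss X s t) (Xst X s t) (Xtt X s t) = 0"
  shows "mean_curvature sol_metric X s t = 0"
proof -
  define p a b where "p = X s t" "a = Xs X s t" "b = Xt X s t"
  define r where "r = 1 / sqrt (ginner sol_metric p (solinv p *v cross3 a b) (solinv p *v cross3 a b))"
  have un: "unit_normal sol_metric X s t = r *\<^sub>R (solinv p *v cross3 a b)"
    unfolding unit_normal_def Let_def matrix_inv_sol p_a_b_def r_def by simp
  then have "mean_curvature sol_metric X s t = r * Ncond p a b (Xss X s t) (Xst X s t) (Xtt X s t) /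
       (2 * (gi p a a * gi p b b - (gi p a b)\<^sup>2))"
    unfolding mean_curvature_def Let_def p_a_b_def[symmetric] un ginner_normal
    by (simp add: ginner_sol Ncond_def algebra_simps)
  then show ?thesis using assms unfolding p_a_b_def by simp
qed

lemma vec3_vd:
  assumes "(f1 has_real_derivative d1) (at x)" "(f2 has_real_derivative d2) (at x)"
    "(f3 has_real_derivative d3) (at x)"
  shows "((\<lambda>x. vector [f1 x, f2 x, f3 x] :: real^3) has_vector_derivative vector [d1, d2, d3]) (at x)"
proof -
  have eq: "(\<lambda>x. vector [f1 x, f2 x, f3 x] :: real^3) =
     (\<lambda>x. f1 x *\<^sub>R axis 1 1 + f2 x *\<^sub>R axis 2 1 + f3 x *\<^sub>R axis 3 1)"
    by (rule ext) (simp add: vec_eq_iff forall_3 axis_def)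
  have eq2: "(vector [d1, d2, d3] :: real^3) = d1 *\<^sub>R axis 1 1 + d2 *\<^sub>R axis 2 1 + d3 *\<^sub>R axis 3 1"
    by (simp add: vec_eq_iff forall_3 axis_def)
  show ?thesis unfolding eq eq2
    using assms by (auto intro!: derivative_eq_intros)
qed

abbreviation S3 :: "(real \<Rightarrow> real) \<Rightarrow> (real \<Rightarrow> real) \<Rightarrow> real \<Rightarrow> real \<Rightarrow> real^3" where
  "S3 f g \<equiv> translation_surface (\<lambda>s. vector [s, 0, f s]) (\<lambda>t. vector [0, t, g t])"

lemma S3_val: "S3 f g s t = vector [s, exp (f s) * t, f s + g t]"
  by (simp add: translation_surface_def sol_mult_def)

lemma S3_Xs:
  assumes "(f has_real_derivative f1) (at s)"
  shows "Xs (S3 f g) s t = vector [1, exp (f s) * f1 * t, f1]"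
  unfolding Xs_def S3_val
  by (rule vector_derivative_at, rule vec3_vd) (auto intro!: derivative_eq_intros assms)

lemma S3_Xt:
  assumes "(g has_real_derivative g1) (at t)"
  shows "Xt (S3 f g) s t = vector [0, exp (f s), g1]"
  unfolding Xt_def S3_val
  by (rule vector_derivative_at, rule vec3_vd) (auto intro!: derivative_eq_intros assms)

lemma S3_Xss:
  assumes "open I" "s \<in> I" "\<And>x. x \<in> I \<Longrightarrow> (f has_real_derivative f1 x) (at x)"
    "(f1 has_real_derivative f2) (at s)"
  shows "Xss (S3 f g) s t = vector [0, exp (f s) * f1 s * f1 s * t + exp (f s) * f2 * t, f2]"
  unfolding Xss_def
proof (rule vector_derivative_at)
  have "((\<lambda>s'. vector [1, exp (f s') * f1 s' * t, f1 s'] :: real^3) has_vector_derivative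
      vector [0, exp (f s) * f1 s * f1 s * t + exp (f s) * f2 * t, f2]) (at s)"
    by (rule vec3_vd) (auto intro!: derivative_eq_intros assms simp: algebra_simps)
  then show "((\<lambda>s'. Xs (S3 f g) s' t) has_vector_derivative
      vector [0, exp (f s) * f1 s * f1 s * t + exp (f s) * f2 * t, f2]) (at s)"
    by (rule has_vector_derivative_transform_within_open[OF _ assms(1,2)]) (simp add: S3_Xs[OF assms(3)])
qed

lemma S3_Xst:
  assumes "(f has_real_derivative f1) (at s)"
  shows "Xst (S3 f g) s t = vector [0, exp (f s) * f1, 0]"
  unfolding Xst_def S3_Xs[OF assms]
  by (rule vector_derivative_at, rule vec3_vd) (auto intro!: derivative_eq_intros)

lemma S3_Xtt:
  assumes "open J" "t \<in> J" "\<And>x. x \<in> J \<Longrightarrow> (g has_real_derivative g1 x) (at x)"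
    "(g1 has_real_derivative g2) (at t)"
  shows "Xtt (S3 f g) s t = vector [0, 0, g2]"
  unfolding Xtt_def
proof (rule vector_derivative_at)
  have "((\<lambda>t'. vector [0, exp (f s), g1 t'] :: real^3) has_vector_derivative vector [0, 0, g2]) (at t)"
    by (rule vec3_vd) (auto intro!: derivative_eq_intros assms)
  then show "((\<lambda>t'. Xt (S3 f g) s t') has_vector_derivative vector [0, 0, g2]) (at t)"
    by (rule has_vector_derivative_transform_within_open[OF _ assms(1,2)]) (simp add: S3_Xt[OF assms(3)])
qed


lemma Ncond_S3: "Ncond (vector[s, F*t, z]) (vector[1, F*a1*t, a1]) (vector[0,F,b1]) (vector[0, F*a1*a1*t + F*a2*t, a2]) (vector[0,F*a1,0]) (vector[0,0,b2]) =
  (exp (2*z) + exp (-2*z) * F^2 * a1^2 * t^2 + a1^2) * (2 * F * b1^2 + F * (b2 + exp (-2*z) * F^2))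
  - 2 * (exp (-2*z) * F^2 * a1 * t + a1 * b1) * (b1 * F * a1 * (t * b1 - 1) + F * a1 * t * b1^2 + F * exp (-2*z) * F^2 * a1 * t)
  + (exp (-2*z) * F^2 + b1^2) * (2 * a1 * F * a1 * (t * b1 - 1) + F * t * (a2 - a1^2) * (- b1) + F * (a2 - exp (2*z) + exp (-2*z) * F^2 * t^2 * a1^2))"
  by (simp add: Ncond_def gi_def covd_sol cross_components inner_vec_def sum_3 algebra_simps power2_eq_square)
definition NE :: "real \<Rightarrow> real \<Rightarrow> real \<Rightarrow> real \<Rightarrow> real \<Rightarrow> real \<Rightarrow> real \<Rightarrow> real \<Rightarrow> real" where
 "NE A B F t a1 a2 b1 b2 = (A + B * F^2 * a1^2 * t^2 + a1^2) * (2 * F * b1^2 + F * (b2 + B * F^2))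
  - 2 * (B * F^2 * a1 * t + a1 * b1) * (b1 * F * a1 * (t * b1 - 1) + F * a1 * t * b1^2 + F * B * F^2 * a1 * t)
  + (B * F^2 + b1^2) * (2 * a1 * F * a1 * (t * b1 - 1) + F * t * (a2 - a1^2) * (- b1) + F * (a2 - A + B * F^2 * t^2 * a1^2))"

lemma NE1: "c \<noteq> 0 \<Longrightarrow> NE A B F t 0 0 (1/c) (-1/c^2) = 0"
  by (simp add: NE_def field_simps)
lemma NE2: "c \<noteq> 0 \<Longrightarrow> NE A B F t (-1/c) (1/c^2) 0 0 = 0"
  by (simp add: NE_def field_simps) (simp add: eval_nat_numeral algebra_simps)
lemma NE3: "t \<noteq> 0 \<Longrightarrow> NE A B F t a1 a2 (1/t) (-1/t^2) = 0"
  by (simp add: NE_def field_simps) (simp add: eval_nat_numeral algebra_simps)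
lemma NE4: "NE A B F t 0 0 0 0 = 0"
  by (simp add: NE_def)
lemma S3_mc:
  assumes "open I" "open J" "s \<in> I" "t \<in> J"
   "\<And>x. x \<in> I \<Longrightarrow> (f has_real_derivative fd x) (at x)"
   "\<And>x. x \<in> I \<Longrightarrow> (fd has_real_derivative fdd x) (at x)"
   "\<And>x. x \<in> J \<Longrightarrow> (g has_real_derivative gd x) (at x)"
   "\<And>x. x \<in> J \<Longrightarrow> (gd has_real_derivative gdd x) (at x)"
   "NE (exp (2 * (f s + g t))) (exp (- 2 * (f s + g t))) (exp (f s)) t (fd s) (fdd s) (gd t) (gdd t) = 0"
  shows "mean_curvature sol_metric (S3 f g) s t = 0"
proof (rule mc_zero)
  have xs: "Xs (S3 f g) s t = vector [1, exp (f s) * fd s * t, fd s]"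
    by (rule S3_Xs) (rule assms(5)[OF assms(3)])
  have xt: "Xt (S3 f g) s t = vector [0, exp (f s), gd t]"
    by (rule S3_Xt) (rule assms(7)[OF assms(4)])
  have xss: "Xss (S3 f g) s t = vector [0, exp (f s) * fd s * fd s * t + exp (f s) * fdd s * t, fdd s]"
    by (rule S3_Xss[OF assms(1,3)]) (auto intro: assms(5,6) simp: assms(3))
  have xst: "Xst (S3 f g) s t = vector [0, exp (f s) * fd s, 0]"
    by (rule S3_Xst) (rule assms(5)[OF assms(3)])
  have xtt: "Xtt (S3 f g) s t = vector [0, 0, gdd t]"
    by (rule S3_Xtt[OF assms(2,4)]) (auto intro: assms(7,8) simp: assms(4))
  show "Ncond (S3 f g s t) (Xs (S3 f g) s t) (Xt (S3 f g) s t) (Xss (S3 f g) s t) (Xst (S3 f g) s t) (Xtt (S3 f g) s t) = 0"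
    unfolding xs xt xss xst xtt
    unfolding S3_val Ncond_S3
    using assms(9) unfolding NE_def by simp
qed


lemma dln:
  fixes x c :: real
  assumes "x + c \<noteq> 0"
  shows "((\<lambda>x. ln \<bar>x + c\<bar>) has_real_derivative 1 / (x + c)) (at x)"
proof (cases "x + c > 0")
  case True
  have "((\<lambda>x. ln (x + c)) has_real_derivative 1 / (x + c)) (at x)"
    using True by (auto intro!: derivative_eq_intros simp: field_simps)
  then show ?thesis
    by (rule has_field_derivative_transform_within_open[where S="{-c<..}"]) (use True in auto)
next
  case False
  then have neg: "x + c < 0" using assms by simp
  have "((\<lambda>x. ln (- (x + c))) has_real_derivative 1 / (x + c)) (at x)"
    using neg by (auto intro!: derivative_eq_intros simp: field_simps)
  then show ?thesis
    by (rule has_field_derivative_transform_within_open[where S="{..< -c}"]) (use neg in auto)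
qed

lemma smooth_d:
  assumes "smooth_on I f" "x \<in> I"
  shows "(f has_real_derivative deriv f x) (at x)" "(deriv f has_real_derivative deriv (deriv f) x) (at x)"
proof -
  have "((deriv ^^ 0) f) differentiable (at x)" "((deriv ^^ 1) f) differentiable (at x)"
    using assms unfolding smooth_on_def by blast+
  then show "(f has_real_derivative deriv f x) (at x)" "(deriv f has_real_derivative deriv (deriv f) x) (at x)"
    by (simp_all add: DERIV_deriv_iff_real_differentiable)
qed

lemma const_on_deriv:
  assumes "open I" "x \<in> I" "\<forall>s\<in>I. f s = a"
  shows "(f has_real_derivative 0) (at x)"
  by (rule has_field_derivative_transform_within_open[where f="\<lambda>_. a" and S=I]) (use assms in auto)

lemma lnc_deriv:
  assumes "open J" "x \<in> J" "- c \<notin> J" "\<forall>t\<in>J. g t = k * ln \<bar>t + c\<bar> + \<mu>"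
  shows "(g has_real_derivative k / (x + c)) (at x)"
proof -
  have xc: "x + c \<noteq> 0" using assms(2,3) by (metis add.commute add_eq_0_iff)
  have "((\<lambda>t. k * ln \<bar>t + c\<bar> + \<mu>) has_real_derivative k * (1 / (x + c)) + 0) (at x)"
    by (rule DERIV_add[OF DERIV_cmult[OF dln[OF xc]] DERIV_const])
  then have "((\<lambda>t. k * ln \<bar>t + c\<bar> + \<mu>) has_real_derivative k / (x + c)) (at x)" by simp
  then show ?thesis
    by (rule has_field_derivative_transform_within_open[where S=J]) (use assms in auto)
qed

lemma inv_deriv:
  assumes "x + c \<noteq> 0"
  shows "((\<lambda>t. k / (t + c)) has_real_derivative - k / (x + c)\<^sup>2) (at x)"
proof -
  have "((\<lambda>t. k / (t + c)) has_real_derivative (0 * (x + c) - k * (1 + 0)) / ((x + c) * (x + c))) (at x)"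
    by (rule DERIV_divide[OF DERIV_const DERIV_add[OF DERIV_ident DERIV_const] assms])
  then show ?thesis by (simp add: power2_eq_square)
qed



lemma case1:
  assumes "open I" "open J" "s \<in> I" "t \<in> J"
    "\<forall>s\<in>I. f s = a" "- c \<notin> J" "\<forall>t\<in>J. g t = ln \<bar>t + c\<bar> + \<mu>"
  shows "mean_curvature sol_metric (S3 f g) s t = 0"
proof -
  have tc: "x + c \<noteq> 0" if "x \<in> J" for x using that assms(6) by (metis add.commute add_eq_0_iff)
  have g': "\<forall>t\<in>J. g t = 1 * ln \<bar>t + c\<bar> + \<mu>" using assms(7) by simp
  show ?thesis
  proof (rule S3_mc[where fd="\<lambda>_. 0" and fdd="\<lambda>_. 0" and gd="\<lambda>t. 1 / (t + c)" and gdd="\<lambda>t. - 1 / (t + c)\<^sup>2", OF assms(1-4)])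
    show "(f has_real_derivative 0) (at x)" if "x \<in> I" for x
      by (rule const_on_deriv[OF assms(1) that assms(5)])
    show "((\<lambda>_. 0) has_real_derivative 0) (at x)" for x :: real by simp
    show "(g has_real_derivative 1 / (x + c)) (at x)" if "x \<in> J" for x
      by (rule lnc_deriv[OF assms(2) that assms(6) g'])
    show "((\<lambda>t. 1 / (t + c)) has_real_derivative - 1 / (x + c)\<^sup>2) (at x)" if "x \<in> J" for x
      using inv_deriv[OF tc[OF that], of 1] by simp
    show "NE (exp (2 * (f s + g t))) (exp (- 2 * (f s + g t))) (exp (f s)) t 0 0 (1 / (t + c)) (- 1 / (t + c)\<^sup>2) = 0"
      by (rule NE1[OF tc[OF assms(4)]])
  qed
qed

lemma case2:
  assumes "open I" "open J" "s \<in> I" "t \<in> J"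
    "- c \<notin> I" "\<forall>s\<in>I. f s = - ln \<bar>s + c\<bar> + \<mu>" "\<forall>t\<in>J. g t = a"
  shows "mean_curvature sol_metric (S3 f g) s t = 0"
proof -
  have tc: "x + c \<noteq> 0" if "x \<in> I" for x using that assms(5) by (metis add.commute add_eq_0_iff)
  have f': "\<forall>s\<in>I. f s = (-1) * ln \<bar>s + c\<bar> + \<mu>" using assms(6) by simp
  show ?thesis
  proof (rule S3_mc[where fd="\<lambda>s. -1 / (s + c)" and fdd="\<lambda>s. 1 / (s + c)\<^sup>2" and gd="\<lambda>_. 0" and gdd="\<lambda>_. 0", OF assms(1-4)])
    show "(f has_real_derivative -1 / (x + c)) (at x)" if "x \<in> I" for x
      by (rule lnc_deriv[OF assms(1) that assms(5) f'])
    show "((\<lambda>s. -1 / (s + c)) has_real_derivative 1 / (x + c)\<^sup>2) (at x)" if "x \<in> I" for x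
      using inv_deriv[OF tc[OF that], of "-1"] by simp
    show "(g has_real_derivative 0) (at x)" if "x \<in> J" for x
      by (rule const_on_deriv[OF assms(2) that assms(7)])
    show "((\<lambda>_. 0) has_real_derivative 0) (at x)" for x :: real by simp
    show "NE (exp (2 * (f s + g t))) (exp (- 2 * (f s + g t))) (exp (f s)) t (-1 / (s + c)) (1 / (s + c)\<^sup>2) 0 0 = 0"
      by (rule NE2[OF tc[OF assms(3)]])
  qed
qed

lemma case3:
  assumes "open I" "open J" "s \<in> I" "t \<in> J" "smooth_on I f"
    "0 \<notin> J" "\<forall>t\<in>J. g t = ln \<bar>t\<bar> + \<mu>"
  shows "mean_curvature sol_metric (S3 f g) s t = 0"
proof -
  have tc: "x + 0 \<noteq> 0" if "x \<in> J" for x using that assms(6) by auto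
  have g': "\<forall>t\<in>J. g t = 1 * ln \<bar>t + 0\<bar> + \<mu>" using assms(7) by simp
  have m0: "- (0::real) \<notin> J" using assms(6) by simp
  show ?thesis
  proof (rule S3_mc[where fd="deriv f" and fdd="deriv (deriv f)" and gd="\<lambda>t. 1 / (t + 0)" and gdd="\<lambda>t. - 1 / (t + 0)\<^sup>2", OF assms(1-4)])
    show "(f has_real_derivative deriv f x) (at x)" if "x \<in> I" for x
      by (rule smooth_d(1)[OF assms(5) that])
    show "(deriv f has_real_derivative deriv (deriv f) x) (at x)" if "x \<in> I" for x
      by (rule smooth_d(2)[OF assms(5) that])
    show "(g has_real_derivative 1 / (x + 0)) (at x)" if "x \<in> J" for x
      by (rule lnc_deriv[OF assms(2) that m0 g'])
    show "((\<lambda>t. 1 / (t + 0)) has_real_derivative - 1 / (x + 0)\<^sup>2) (at x)" if "x \<in> J" for x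
      using inv_deriv[OF tc[OF that], of 1] by simp
    have "t \<noteq> 0" using tc[OF assms(4)] by simp
    then show "NE (exp (2 * (f s + g t))) (exp (- 2 * (f s + g t))) (exp (f s)) t (deriv f s) (deriv (deriv f) s) (1 / (t + 0)) (- 1 / (t + 0)\<^sup>2) = 0"
      using NE3 by simp
  qed
qed

lemma case4:
  assumes "open I" "open J" "s \<in> I" "t \<in> J" "\<forall>s\<in>I. f s = a" "\<forall>t\<in>J. g t = b"
  shows "mean_curvature sol_metric (S3 f g) s t = 0"
proof (rule S3_mc[where fd="\<lambda>_. 0" and fdd="\<lambda>_. 0" and gd="\<lambda>_. 0" and gdd="\<lambda>_. 0", OF assms(1-4)])
  show "(f has_real_derivative 0) (at x)" if "x \<in> I" for x
    by (rule const_on_deriv[OF assms(1) that assms(5)])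
  show "(g has_real_derivative 0) (at x)" if "x \<in> J" for x
    by (rule const_on_deriv[OF assms(2) that assms(6)])
  show "((\<lambda>_. 0) has_real_derivative 0) (at x)" for x :: real by simp
  show "((\<lambda>_. 0) has_real_derivative 0) (at x)" for x :: real by simp
  show "NE (exp (2 * (f s + g t))) (exp (- 2 * (f s + g t))) (exp (f s)) t 0 0 0 0 = 0"
    by (rule NE4)
qed

abbreviation P3 :: "real \<Rightarrow> (real \<Rightarrow> real) \<Rightarrow> real \<Rightarrow> real \<Rightarrow> real^3" where
  "P3 x0 g \<equiv> translation_surface (\<lambda>s. vector [x0, 0, s]) (\<lambda>t. vector [0, t, g t])"

lemma P3_val: "P3 x0 g s t = vector [x0, exp s * t, s + g t]"
  by (simp add: translation_surface_def sol_mult_def)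

lemma plane:
  assumes "open J" "t \<in> J" "smooth_on J g"
  shows "mean_curvature sol_metric (P3 x0 g) s t = 0"
proof (rule mc_zero)
  have dg: "\<And>x. x \<in> J \<Longrightarrow> (g has_real_derivative deriv g x) (at x)"
    "\<And>x. x \<in> J \<Longrightarrow> (deriv g has_real_derivative deriv (deriv g) x) (at x)"
    using smooth_d[OF assms(3)] by blast+
  have xs: "Xs (P3 x0 g) s' t' = vector [0, exp s' * t', 1]" for s' t'
    unfolding Xs_def P3_val
    by (rule vector_derivative_at, rule vec3_vd) (auto intro!: derivative_eq_intros)
  have xt: "Xt (P3 x0 g) s' t' = vector [0, exp s', deriv g t']" if "t' \<in> J" for s' t'
    unfolding Xt_def P3_val
    by (rule vector_derivative_at, rule vec3_vd) (auto intro!: derivative_eq_intros dg(1)[OF that])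
  have xss: "Xss (P3 x0 g) s t = vector [0, exp s * t, 0]"
    unfolding Xss_def xs
    by (rule vector_derivative_at, rule vec3_vd) (auto intro!: derivative_eq_intros)
  have xst: "Xst (P3 x0 g) s t = vector [0, exp s, 0]"
    unfolding Xst_def xs
    by (rule vector_derivative_at, rule vec3_vd) (auto intro!: derivative_eq_intros)
  have xtt: "Xtt (P3 x0 g) s t = vector [0, 0, deriv (deriv g) t]"
    unfolding Xtt_def
  proof (rule vector_derivative_at)
    have "((\<lambda>t'. vector [0, exp s, deriv g t'] :: real^3) has_vector_derivative vector [0, 0, deriv (deriv g) t]) (at t)"
      by (rule vec3_vd) (auto intro!: derivative_eq_intros dg(2)[OF assms(2)])
    then show "((\<lambda>t'. Xt (P3 x0 g) s t') has_vector_derivative vector [0, 0, deriv (deriv g) t]) (at t)"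
      by (rule has_vector_derivative_transform_within_open[OF _ assms(1,2)]) (simp add: xt)
  qed
  show "Ncond (P3 x0 g s t) (Xs (P3 x0 g) s t) (Xt (P3 x0 g) s t) (Xss (P3 x0 g) s t) (Xst (P3 x0 g) s t) (Xtt (P3 x0 g) s t) = 0"
    unfolding xs xt[OF assms(2)] xss xst xtt
    unfolding P3_val
    by (simp add: Ncond_def covd_sol cross_components inner_vec_def sum_3)
qed

theorem mainTheorem3:
  fixes I J :: "real set"
  assumes "open_interval I" and "open_interval J"
  shows
    "(\<forall>f g. smooth_on I f \<and> smooth_on J g \<longrightarrow>
       ((\<exists>a c \<mu>. (\<forall>s\<in>I. f s = a) \<and> - c \<notin> J \<and> (\<forall>t\<in>J. g t = ln \<bar>t + c\<bar> + \<mu>))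
        \<or> (\<exists>a c \<mu>. - c \<notin> I \<and> (\<forall>s\<in>I. f s = - ln \<bar>s + c\<bar> + \<mu>) \<and> (\<forall>t\<in>J. g t = a))
        \<or> (\<exists>\<mu>. 0 \<notin> J \<and> (\<forall>t\<in>J. g t = ln \<bar>t\<bar> + \<mu>))
        \<or> (\<exists>a b. (\<forall>s\<in>I. f s = a) \<and> (\<forall>t\<in>J. g t = b)))
       \<longrightarrow> minimal_on sol_metric
             (translation_surface (\<lambda>s. vector [s, 0, f s]) (\<lambda>t. vector [0, t, g t])) I J) \<and>
    (\<forall>x0 g. smooth_on J g \<longrightarrow>
       minimal_on sol_metric
         (translation_surface (\<lambda>s. vector [x0, 0, s]) (\<lambda>t. vector [0, t, g t])) I J
       \<and> (\<forall>s t. translation_surface (\<lambda>s. vector [x0, 0, s]) (\<lambda>t. vector [0, t, g t]) s t $ 1 = x0))"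
proof -
  have oI: "open I" and oJ: "open J" using assms unfolding open_interval_def by auto
  show ?thesis
  proof (intro conjI allI impI)
    fix f g
    assume sm: "smooth_on I f \<and> smooth_on J g"
      and cs: "(\<exists>a c \<mu>. (\<forall>s\<in>I. f s = a) \<and> - c \<notin> J \<and> (\<forall>t\<in>J. g t = ln \<bar>t + c\<bar> + \<mu>))
        \<or> (\<exists>a c \<mu>. - c \<notin> I \<and> (\<forall>s\<in>I. f s = - ln \<bar>s + c\<bar> + \<mu>) \<and> (\<forall>t\<in>J. g t = a))
        \<or> (\<exists>\<mu>. 0 \<notin> J \<and> (\<forall>t\<in>J. g t = ln \<bar>t\<bar> + \<mu>))
        \<or> (\<exists>a b. (\<forall>s\<in>I. f s = a) \<and> (\<forall>t\<in>J. g t = b))"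
    show "minimal_on sol_metric (S3 f g) I J"
      unfolding minimal_on_def
    proof (intro ballI)
      fix s t assume s: "s \<in> I" and t: "t \<in> J"
      from cs show "mean_curvature sol_metric (S3 f g) s t = 0"
      proof (elim disjE exE conjE)
        fix a c \<mu> assume "\<forall>s\<in>I. f s = a" "- c \<notin> J" "\<forall>t\<in>J. g t = ln \<bar>t + c\<bar> + \<mu>"
        then show ?thesis by (rule case1[OF oI oJ s t])
      next
        fix a c \<mu> assume "- c \<notin> I" "\<forall>s\<in>I. f s = - ln \<bar>s + c\<bar> + \<mu>" "\<forall>t\<in>J. g t = a"
        then show ?thesis by (rule case2[OF oI oJ s t])
      next
        fix \<mu> assume "0 \<notin> J" "\<forall>t\<in>J. g t = ln \<bar>t\<bar> + \<mu>"
        then show ?thesis using sm by (intro case3[OF oI oJ s t]) auto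
      next
        fix a b assume "\<forall>s\<in>I. f s = a" "\<forall>t\<in>J. g t = b"
        then show ?thesis by (rule case4[OF oI oJ s t])
      qed
    qed
  next
    fix x0 g assume sg: "smooth_on J g"
    show "minimal_on sol_metric (P3 x0 g) I J"
      unfolding minimal_on_def using plane[OF oJ _ sg] by blast
  next
    fix x0 g s t
    show "P3 x0 g s t $ 1 = x0" by (simp add: P3_val)
  qed
qed

end
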